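(* Let $n \geq 3$ be an integer, let $p(x) \in \mathcal{T}_n$, and let $r = \deg \mathrm{Min}(p,x)$ with $3 \leq r \leq n$. Let $q(x) \in \mathcal{J}(p(x))$ and let $f(x) = q(x)/\gcd(p(x),p'(x)) \in \mathbb{Z}[x]$. Write $\mathrm{Min}(p,x) = \sum_{i=0}^r b_i x^{r-i}$ and $f(x) = \sum_{i=0}^{r-1} c_i x^{r-1-i}$ with integer coefficients. Then $c_0 = b_0 = 1$, $c_1 = b_1$, and $c_2 = b_2 + n - 1$.
   Context: A nonzero real polynomial is real-rooted if all its complex roots are real. For $n\ge1$, a Seidel trace polynomial of degree $n$ is a real-rooted polynomial $p(x)=\sum_{i=0}^n a_i x^{n-i}\in\mathbb{Z}[x]$ of degree $n$ with $a_0=1$, $a_1=0$, and $a_2=-\binom{n}{2}$ if $n\ge2$; $\mathcal{T}_n$ is the set of these. For real-rooted $p,q$ with $\deg p = m$, $\deg q = m-1$, roots $\lambda_1\le\dots\le\lambda_m$ of $p$ and $\mu_1\le\dots\le\mu_{m-1}$ of $q$, we say $q$ interlaces $p$ if $\lambda_i \le \mu_i \le \lambda_{i+1}$ for all $i$. For $p\in\mathcal{T}_n$, $\mathcal{J}(p(x))$ is the set of integer polynomials $q(x)$ of degree $n-1$ with $q\in\mathcal{T}_{n-1}$ and $q$ interlacing $p$. Here $\gcd(p(x),p'(x))$ is the monic gcd and $\mathrm{Min}(p,x) := p(x)/\gcd(p(x),p'(x))$. *)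

theory Defs
  imports "HOL-Computational_Algebra.Computational_Algebra" "HOL-Computational_Algebra.Field_as_Ring"
begin

definition real_rooted :: "int poly \<Rightarrow> bool" where
  "real_rooted p \<longleftrightarrow> p \<noteq> 0 \<and>
     (\<forall>z::complex. poly (map_poly of_int p) z = 0 \<longrightarrow> z \<in> \<real>)"

text \<open>Seidel trace polynomials of degree n: coefficients a_i = coeff p (n - i).\<close>
definition seidel_trace :: "nat \<Rightarrow> int poly set" where
  "seidel_trace n = {p. n \<ge> 1 \<and> real_rooted p \<and> degree p = n \<and>
       coeff p n = 1 \<and> coeff p (n - 1) = 0 \<and>
       (n \<ge> 2 \<longrightarrow> coeff p (n - 2) = - int (n choose 2))}"

definition interlaces :: "int poly \<Rightarrow> int poly \<Rightarrow> bool" where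
  "interlaces q p \<longleftrightarrow> real_rooted p \<and> real_rooted q \<and> degree p \<ge> 1 \<and>
     degree q = degree p - 1 \<and>
     (\<exists>ls ms :: real list. sorted ls \<and> sorted ms \<and>
        length ls = degree p \<and> length ms = degree q \<and>
        map_poly of_int p = smult (of_int (lead_coeff p)) (\<Prod>l\<leftarrow>ls. [:-l, 1:]) \<and>
        map_poly of_int q = smult (of_int (lead_coeff q)) (\<Prod>m\<leftarrow>ms. [:-m, 1:]) \<and>
        (\<forall>i < length ms. ls ! i \<le> ms ! i \<and> ms ! i \<le> ls ! (i + 1)))"

definition J_set :: "int poly \<Rightarrow> int poly set" where
  "J_set p = {q. degree q = degree p - 1 \<and> q \<in> seidel_trace (degree p - 1) \<and> interlaces q p}"

text \<open>Monic gcd of p and p', computed over the rationals (gcd of a field polynomial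
  is normalized, i.e. monic).\<close>
definition gcd_pp' :: "int poly \<Rightarrow> rat poly" where
  "gcd_pp' p = gcd (map_poly of_int p) (pderiv (map_poly of_int p))"

definition Min_poly :: "int poly \<Rightarrow> rat poly" where
  "Min_poly p = map_poly of_int p div gcd_pp' p"

end

theory Submission imports Defs "Berlekamp_Zassenhaus.Factor_Bound" begin
hide_const (open) UnivPoly.coeff Coset.order UnivPoly.monom module.smult

lemma interlace_count:
  fixes ls ms :: "real list"
  assumes "sorted ls" "sorted ms" "length ls = Suc (length ms)"
    "\<forall>i<length ms. ls!i \<le> ms!i \<and> ms!i \<le> ls!(i+1)"
  shows "count_list ls x \<le> Suc (count_list ms x)"
  using assms
proof (induction ms arbitrary: ls)
  case Nil
  then obtain l where "ls = [l]" by (cases ls) auto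
  then show ?case by simp
next
  case (Cons m ms)
  from Cons.prems(3) obtain l ls' where ls: "ls = l # ls'" and len: "length ls' = Suc (length ms)"
    by (cases ls) auto
  have s1: "sorted ls'" using Cons.prems(1) ls by simp
  have s2: "sorted ms" using Cons.prems(2) by simp
  have il: "\<forall>i<length ms. ls'!i \<le> ms!i \<and> ms!i \<le> ls'!(i+1)"
  proof (intro allI impI)
    fix i assume "i < length ms"
    then have "Suc i < length (m#ms)" by simp
    with Cons.prems(4) have "ls!(Suc i) \<le> (m#ms)!(Suc i) \<and> (m#ms)!(Suc i) \<le> ls!(Suc i+1)" by blast
    then show "ls'!i \<le> ms!i \<and> ms!i \<le> ls'!(i+1)" using ls by simp
  qed
  have IH: "count_list ls' x \<le> Suc (count_list ms x)" using Cons.IH[OF s1 s2 len il] .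
  have h0: "l \<le> m \<and> m \<le> ls'!0" using Cons.prems(4) ls by fastforce
  show ?case
  proof (cases "l = x \<and> m \<noteq> x")
    case True
    have "\<forall>y\<in>set ls'. y > x"
    proof
      fix y assume "y \<in> set ls'"
      then obtain j where j: "j < length ls'" "ls'!j = y" by (auto simp: in_set_conv_nth)
      have "ls'!0 \<le> ls'!j" using s1 j sorted_nth_mono[of ls' 0 j] by simp
      then show "y > x" using True h0 j by auto
    qed
    then have "count_list ls' x = 0" by (auto simp: count_list_0_iff)
    then show ?thesis using ls by simp
  next
    case False
    then show ?thesis using IH ls by auto
  qed
qed

lemma order_prod_lin:
  fixes z :: "'a::idom"
  shows "Polynomial.order z (\<Prod>l\<leftarrow>xs. [:-l, 1:]) = count_list xs z"
proof (induction xs)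
  case Nil
  then show ?case by simp
next
  case (Cons a xs)
  have nz: "(\<Prod>l\<leftarrow>xs. [:-l, 1:]) \<noteq> (0 :: 'a poly)"
    by (auto simp: prod_list_zero_iff)
  have "Polynomial.order z ([:-a,1:] * (\<Prod>l\<leftarrow>xs. [:-l, 1:])) =
     Polynomial.order z [:-a,1:] + Polynomial.order z (\<Prod>l\<leftarrow>xs. [:-l, 1:])"
  proof (rule order_mult)
    have "[:-a,(1::'a):] \<noteq> 0" by simp
    then show "[:-a,1:] * (\<Prod>l\<leftarrow>xs. [:-l, 1:]) \<noteq> 0" using nz by (metis mult_eq_0_iff)
  qed
  moreover have "Polynomial.order z [:-a,1:] = (if a = z then 1 else 0)"
    using order_linear'[of z "-a"] by auto
  ultimately show ?case using Cons by auto
qed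

lemma dvd_by_order:
  fixes g h :: "complex poly"
  assumes "g \<noteq> 0" "\<forall>z. Polynomial.order z g \<le> Polynomial.order z h"
  shows "g dvd h"
  using assms
proof (induction "degree g" arbitrary: g h rule: less_induct)
  case (less g)
  show ?case
  proof (cases "h = 0")
    case True then show ?thesis by simp
  next
    case hnz: False
    show ?thesis
    proof (cases "degree g = 0")
      case True
      have "is_unit g" using less.prems(1) True is_unit_iff_degree by blast
      then show ?thesis by (rule unit_imp_dvd)
    next
      case False
      have "\<not> constant (poly g)" using False by (simp add: constant_degree)
      from fundamental_theorem_of_algebra[OF this] obtain a where a: "poly g a = 0" by blast
      have "Polynomial.order a g \<noteq> 0" using a less.prems(1) order_root by blast
      moreover have "Polynomial.order a g \<le> Polynomial.order a h" using less.prems(2) by blast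
      ultimately have "Polynomial.order a h \<ge> 1" by linarith
      then have "[:-a,1:] dvd h" using order_divides[of a 1 h] by simp
      then obtain h' where h': "h = [:-a,1:] * h'" by auto
      have "[:-a,1:] dvd g" using a poly_eq_0_iff_dvd by blast
      then obtain g' where g': "g = [:-a,1:] * g'" by auto
      have g'nz: "g' \<noteq> 0" using g' less.prems(1) by auto
      have h'nz: "h' \<noteq> 0" using h' hnz by auto
      have "degree ([:-a,1:] * g') = degree [:-a,(1::complex):] + degree g'"
        by (rule degree_mult_eq) (simp_all add: g'nz)
      then have dg: "degree g' < degree g" using g' by simp
      have "\<forall>z. Polynomial.order z g' \<le> Polynomial.order z h'"
      proof
        fix z
        have "Polynomial.order z g = Polynomial.order z [:-a,1:] + Polynomial.order z g'"
        proof -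
          have nz: "[:-a,1:] * g' \<noteq> 0" using g' less.prems(1) by metis
          show ?thesis unfolding g' by (rule order_mult[OF nz])
        qed
        moreover have "Polynomial.order z h = Polynomial.order z [:-a,1:] + Polynomial.order z h'"
        proof -
          have nz: "[:-a,1:] * h' \<noteq> 0" using h' hnz by metis
          show ?thesis unfolding h' by (rule order_mult[OF nz])
        qed
        ultimately show "Polynomial.order z g' \<le> Polynomial.order z h'"
          using less.prems(2) by (metis add_le_cancel_left)
      qed
      then have "g' dvd h'" using less.hyps[OF dg g'nz] by blast
      then have "[:-a,1:] * g' dvd [:-a,1:] * h'" by (rule mult_dvd_mono[OF dvd_refl])
      then show ?thesis unfolding g' h' .
    qed
  qed
qed

lemma monic_factor_int:
  fixes p :: "int poly" and b h :: "rat poly"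
  assumes "map_poly of_int p = b * h" "lead_coeff p = 1" "lead_coeff b = 1"
  shows "\<forall>i. coeff b i \<in> \<int>"
proof -
  obtain r rg where rr: "rat_to_normalized_int_poly b = (r, rg)" by force
  note R = rat_to_normalized_int_poly[OF rr]
  obtain s where ps: "p = rg * smult (content p) s" using rat_to_int_factor_explicit[OF assms(1) rr] by blast
  have "lead_coeff rg * lead_coeff (smult (content p) s) = 1"
    using assms(2) ps by (metis lead_coeff_mult)
  then have "lead_coeff rg = 1 \<or> lead_coeff rg = -1" using zmult_eq_1_iff by blast
  moreover have "1 = r * of_int (lead_coeff rg)" using R(1) assms(3)
    by (metis lead_coeff_smult of_int_hom.hom_lead_coeff)
  ultimately have "r = 1 \<and> lead_coeff rg = 1" using R(2) by auto
  then have "b = map_poly of_int rg" using R(1) by simp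
  then show ?thesis by (simp add: coeff_map_poly)
qed

lemma choose2_step: "Suc m choose 2 = (m choose 2) + m"
proof -
  have "(Suc m choose Suc 1) = (m choose 1) + (m choose Suc 1)" by (rule binomial_Suc_Suc)
  then show ?thesis by (simp add: numeral_2_eq_2)
qed

lemma coeff_mult_1: "coeff (a*b) 1 = coeff a 0 * coeff b 1 + coeff a 1 * coeff (b::'a::comm_semiring_1 poly) 0"
  by (simp add: coeff_mult)

lemma coeff_mult_2: "coeff (a*b) 2 = coeff a 0 * coeff b 2 + coeff a 1 * coeff b 1 + coeff a 2 * coeff (b::'a::comm_semiring_1 poly) 0"
  by (simp add: coeff_mult numeral_2_eq_2)

interpretation ofr_poly: map_poly_inj_idom_divide_hom "of_real :: real \<Rightarrow> complex" ..
interpretation ofq_poly: map_poly_inj_idom_divide_hom "of_rat :: rat \<Rightarrow> complex" ..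

theorem lemma4p3:
  fixes n r :: nat and p q :: "int poly"
  assumes "n \<ge> 3"
    and "p \<in> seidel_trace n"
    and "r = degree (Min_poly p)"
    and "3 \<le> r" and "r \<le> n"
    and "q \<in> J_set p"
  shows "gcd_pp' p dvd map_poly of_int q \<and>
    (let f = map_poly of_int q div gcd_pp' p; b = Min_poly p in
       degree f = r - 1 \<and> (\<forall>i. coeff f i \<in> \<int>) \<and> (\<forall>i. coeff b i \<in> \<int>) \<and>
       coeff f (r - 1) = 1 \<and> coeff b r = 1 \<and>
       coeff f (r - 2) = coeff b (r - 1) \<and>
       coeff f (r - 3) = coeff b (r - 2) + of_nat n - 1)"
proof -
  have pT: "real_rooted p" "degree p = n" "coeff p n = 1" "coeff p (n-1) = 0" "coeff p (n-2) = - int (n choose 2)"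
    using assms(1,2) by (auto simp: seidel_trace_def)
  have qJ: "degree q = n - 1" "q \<in> seidel_trace (n-1)" "interlaces q p" using assms(6) pT(2) by (auto simp: J_set_def)
  have qT: "real_rooted q" "coeff q (n-1) = 1" "coeff q (n-1-1) = 0" "coeff q (n-1-2) = - int ((n-1) choose 2)"
    using qJ(2) assms(1) by (auto simp: seidel_trace_def)
  have lp: "lead_coeff p = 1" using pT by simp
  have lq: "lead_coeff q = 1" using qT qJ by simp
  from qJ(3) obtain ls ms :: "real list" where
    I: "sorted ls" "sorted ms" "length ls = degree p" "length ms = degree q"
      "map_poly of_int p = smult (of_int (lead_coeff p)) (\<Prod>l\<leftarrow>ls. [:-l, 1:])"
      "map_poly of_int q = smult (of_int (lead_coeff q)) (\<Prod>m\<leftarrow>ms. [:-m, 1:])"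
      "\<forall>i < length ms. ls ! i \<le> ms ! i \<and> ms ! i \<le> ls ! (i + 1)"
    unfolding interlaces_def by blast
  have RP: "(map_poly of_int p :: real poly) = (\<Prod>l\<leftarrow>ls. [:-l, 1:])" using I(5) lp by simp
  have RQ: "(map_poly of_int q :: real poly) = (\<Prod>m\<leftarrow>ms. [:-m, 1:])" using I(6) lq by simp
  have lens: "length ls = Suc (length ms)" using I(3,4) pT(2) qJ(1) assms(1) by simp
  define P :: "rat poly" where "P = map_poly of_int p"
  define Q :: "rat poly" where "Q = map_poly of_int q"
  define G where "G = gcd_pp' p"
  have G: "G = gcd P (pderiv P)" unfolding G_def gcd_pp'_def P_def by simp
  have degP: "degree P = n" unfolding P_def using pT(2) by simp
  have degQ: "degree Q = n - 1" unfolding Q_def using qJ(1) by simp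
  have Pnz: "P \<noteq> 0" using degP assms(1) by auto
  have dPnz: "pderiv P \<noteq> 0" using degP assms(1) by (simp add: pderiv_eq_0_iff)
  have Gnz: "G \<noteq> 0" using G Pnz by simp
  have Gmon: "lead_coeff G = 1" using G Pnz poly_gcd_monic by blast
  have GP: "G dvd P" and GdP: "G dvd pderiv P" using G by auto
  let ?C = "map_poly (of_rat :: rat \<Rightarrow> complex)"
  have CP: "?C P = map_poly of_real (map_poly of_int p :: real poly)"
    unfolding P_def by (simp add: map_poly_map_poly o_def)
  have CQ: "?C Q = map_poly of_real (map_poly of_int q :: real poly)"
    unfolding Q_def by (simp add: map_poly_map_poly o_def)
  have CP': "?C P = map_poly of_int p"
    unfolding P_def by (simp add: map_poly_map_poly o_def)
  have CPnz: "?C P \<noteq> 0" using Pnz by simp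
  have CQnz: "?C Q \<noteq> 0" using degQ assms(1) by auto
  have CdPnz: "pderiv (?C P) \<noteq> 0" using dPnz by (simp add: of_rat_hom.map_poly_pderiv[symmetric])
  have CGnz: "?C G \<noteq> 0" using Gnz by simp
  have CGP: "?C G dvd ?C P" using GP by (rule ofq_poly.hom_dvd)
  have CGdP: "?C G dvd pderiv (?C P)"
    using ofq_poly.hom_dvd[OF GdP] by (simp add: of_rat_hom.map_poly_pderiv)
  have ord: "\<forall>z. Polynomial.order z (?C G) \<le> Polynomial.order z (?C Q)"
  proof
    fix z :: complex
    show "Polynomial.order z (?C G) \<le> Polynomial.order z (?C Q)"
    proof (cases "poly (?C P) z = 0")
      case False
      have "Polynomial.order z (?C G) \<le> Polynomial.order z (?C P)"
        using dvd_imp_order_le[OF CPnz CGP] .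
      also have "\<dots> = 0" using False by (rule order_0I)
      finally show ?thesis by simp
    next
      case True
      have o1: "Polynomial.order z (?C P) = Suc (Polynomial.order z (pderiv (?C P)))"
        using order_pderiv[OF CPnz True] .
      have o2: "Polynomial.order z (?C G) \<le> Polynomial.order z (pderiv (?C P))"
        using dvd_imp_order_le[OF CdPnz CGdP] .
      have "z \<in> \<real>" using pT(1) True CP' unfolding real_rooted_def by auto
      then obtain x where zx: "z = of_real x" by (auto elim: Reals_cases)
      have "Polynomial.order z (?C P) = count_list ls x"
        unfolding zx CP ofr_poly.order_hom RP order_prod_lin ..
      moreover have "Polynomial.order z (?C Q) = count_list ms x"
        unfolding zx CQ ofr_poly.order_hom RQ order_prod_lin ..
      moreover have "count_list ls x \<le> Suc (count_list ms x)"
        using interlace_count[OF I(1,2) lens I(7)] .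
      ultimately show ?thesis using o1 o2 by simp
    qed
  qed
  have GQ: "G dvd Q"
    using dvd_by_order[OF CGnz ord] by (rule of_rat_hom.dvd_map_poly_hom_imp_dvd)
  define f where "f = Q div G"
  define b where "b = Min_poly p"
  have b: "b = P div G" unfolding b_def Min_poly_def P_def G_def by simp
  have Pf: "P = G * b" using GP b by simp
  have Qf: "Q = G * f" using GQ f_def by simp
  have bnz: "b \<noteq> 0" using Pf Pnz by auto
  have fnz: "f \<noteq> 0" using Qf degQ assms(1) by auto
  have degb: "degree b = r" using assms(3) b_def by simp
  have dG: "degree G + r = n" using Pf degP degb Gnz bnz by (simp add: degree_mult_eq)
  have degf: "degree f = r - 1" using Qf degQ dG Gnz fnz by (simp add: degree_mult_eq)
  have lP: "lead_coeff P = 1" unfolding P_def using lp by (simp add: of_int_hom.hom_lead_coeff)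
  have lQ: "lead_coeff Q = 1" unfolding Q_def using lq by (simp add: of_int_hom.hom_lead_coeff)
  have lb: "lead_coeff b = 1" using lP Pf Gmon by (simp add: lead_coeff_mult)
  have lf: "lead_coeff f = 1" using lQ Qf Gmon by (simp add: lead_coeff_mult)
  have intb: "\<forall>i. coeff b i \<in> \<int>"
    using monic_factor_int[of p b G] Pf lp lb unfolding P_def by (simp add: mult.commute)
  have intf: "\<forall>i. coeff f i \<in> \<int>"
    using monic_factor_int[of q f G] Qf lq lf unfolding Q_def by (simp add: mult.commute)
  have cf1: "coeff f (r - 1) = 1" using lf degf by simp
  have cb1: "coeff b r = 1" using lb degb by simp
  define g1 where "g1 = coeff (reflect_poly G) 1"
  define g2 where "g2 = coeff (reflect_poly G) 2"
  have g0: "coeff (reflect_poly G) 0 = 1" using Gmon by simp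
  have RPf: "reflect_poly P = reflect_poly G * reflect_poly b" using Pf by (simp add: reflect_poly_mult)
  have RQf: "reflect_poly Q = reflect_poly G * reflect_poly f" using Qf by (simp add: reflect_poly_mult)
  have e1: "coeff (reflect_poly P) 1 = coeff (reflect_poly b) 1 + g1 * coeff (reflect_poly b) 0"
    unfolding RPf coeff_mult_1 g0 g1_def by simp
  have e2: "coeff (reflect_poly P) 2 = coeff (reflect_poly b) 2 + g1 * coeff (reflect_poly b) 1 + g2 * coeff (reflect_poly b) 0"
    unfolding RPf coeff_mult_2 g0 g1_def g2_def by simp
  have e3: "coeff (reflect_poly Q) 1 = coeff (reflect_poly f) 1 + g1 * coeff (reflect_poly f) 0"
    unfolding RQf coeff_mult_1 g0 g1_def by simp
  have e4: "coeff (reflect_poly Q) 2 = coeff (reflect_poly f) 2 + g1 * coeff (reflect_poly f) 1 + g2 * coeff (reflect_poly f) 0"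
    unfolding RQf coeff_mult_2 g0 g1_def g2_def by simp
  have rb0: "coeff (reflect_poly b) 0 = 1" using lb by simp
  have rf0: "coeff (reflect_poly f) 0 = 1" using lf by simp
  have rb1: "coeff (reflect_poly b) 1 = coeff b (r - 1)" using degb assms(4) by (simp add: coeff_reflect_poly)
  have rb2: "coeff (reflect_poly b) 2 = coeff b (r - 2)" using degb assms(4) by (simp add: coeff_reflect_poly)
  have rf1: "coeff (reflect_poly f) 1 = coeff f (r - 2)" using degf assms(4) by (simp add: coeff_reflect_poly numeral_2_eq_2)
  have rf2: "coeff (reflect_poly f) 2 = coeff f (r - 3)" using degf assms(4) by (simp add: coeff_reflect_poly numeral_3_eq_3)
  have rP1a: "coeff (reflect_poly P) 1 = coeff P (n - 1)" using degP assms(1) by (simp add: coeff_reflect_poly)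
  have rP2a: "coeff (reflect_poly P) 2 = coeff P (n - 2)" using degP assms(1) by (simp add: coeff_reflect_poly)
  have rQ1a: "coeff (reflect_poly Q) 1 = coeff Q (n - 1 - 1)" using degQ assms(1) by (simp add: coeff_reflect_poly)
  have rQ2a: "coeff (reflect_poly Q) 2 = coeff Q (n - 1 - 2)" using degQ assms(1) by (simp add: coeff_reflect_poly)
  have "coeff P (n-1) = 0" unfolding P_def using pT(4) by simp
  then have rP1: "coeff (reflect_poly P) 1 = 0" using rP1a by simp
  have "coeff P (n-2) = - of_nat (n choose 2)" unfolding P_def using pT(5) by simp
  then have rP2: "coeff (reflect_poly P) 2 = - of_nat (n choose 2)" using rP2a by simp
  have "coeff Q (n-1-1) = 0" unfolding Q_def using qT(3) by simp
  then have rQ1: "coeff (reflect_poly Q) 1 = 0" using rQ1a by simp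
  have "coeff Q (n-1-2) = - of_nat ((n-1) choose 2)" unfolding Q_def using qT(4) by simp
  then have rQ2: "coeff (reflect_poly Q) 2 = - of_nat ((n - 1) choose 2)" using rQ2a by simp
  have ch: "(n choose 2) = ((n - 1) choose 2) + (n - 1)"
    using choose2_step[of "n - 1"] assms(1) by simp
  have ch': "(of_nat (n choose 2) :: rat) = of_nat ((n - 1) choose 2) + of_nat n - 1"
    using ch assms(1) by (simp add: of_nat_diff)
  have c1: "coeff f (r - 2) = coeff b (r - 1)"
    using e1 e3 rb0 rf0 rb1 rf1 rP1 rQ1 by simp
  have c2: "coeff f (r - 3) = coeff b (r - 2) + of_nat n - 1"
    using e2 e4 rb0 rf0 rb1 rf1 rb2 rf2 rP2 rQ2 c1 ch' by simp
  show ?thesis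
    unfolding Let_def
    using GQ degf intb intf cf1 cb1 c1 c2
    unfolding f_def b_def G_def Q_def by simp
qed

end
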